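(* Let $\Omega\subset\mathbb{R}^2$ be open, $\lambda>0$, and let $u\in L^2(\Omega)$ satisfy $-\Delta u=\lambda u$ in $\Omega$. Let $\mathbf{x}_0\in\Omega$, $h>0$, and let $\mathbf{e}^-,\mathbf{e}^+$ be unit vectors with angle $\alpha\pi$ from $\mathbf{e}^-$ to $\mathbf{e}^+$, where $\alpha\in(0,2)$ is irrational; put $\Gamma^\pm=\{\mathbf{x}_0+t\mathbf{e}^\pm:0\le t\le h\}\subset\Omega$. Suppose $\Gamma^-$ and $\Gamma^+$ are generalized singular lines of $u$ with constant parameters $\eta_1\equiv C_1$ and $\eta_2\equiv C_2$ respectively. Then $\mathrm{Vani}(u;\mathbf{x}_0)=0$ if $u(\mathbf{x}_0)\neq0$, and $\mathrm{Vani}(u;\mathbf{x}_0)=+\infty$ if $u(\mathbf{x}_0)=0$.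
   Context: No boundary condition is imposed on $\partial\Omega$; $u$ is real-analytic in $\Omega$. A generalized singular line with parameter $\eta$ (not identically zero; here a nonzero complex constant) is a segment $\Gamma$ on which $\partial_\nu u+\eta u=0$, $\nu$ a unit normal to $\Gamma$. $\mathrm{Vani}(u;\mathbf{x}_0)$ is the smallest degree of a nonzero homogeneous term in the Taylor expansion of $u$ at $\mathbf{x}_0$ ($+\infty$ if all vanish). *)

theory Defs
  imports "HOL-Analysis.Analysis" "HOL-Library.Extended_Nat"
begin

type_synonym pt = "real \<times> real"

definition dirderiv :: "pt \<Rightarrow> (pt \<Rightarrow> complex) \<Rightarrow> pt \<Rightarrow> complex" where
  "dirderiv e f x = vector_derivative (\<lambda>t. f (x + t *\<^sub>R e)) (at 0)"

definition pdiff :: "nat \<Rightarrow> nat \<Rightarrow> (pt \<Rightarrow> complex) \<Rightarrow> pt \<Rightarrow> complex" where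
  "pdiff i j f = (dirderiv (1,0) ^^ i) ((dirderiv (0,1) ^^ j) f)"

definition laplacian :: "(pt \<Rightarrow> complex) \<Rightarrow> pt \<Rightarrow> complex" where
  "laplacian f x = pdiff 2 0 f x + pdiff 0 2 f x"

text \<open>Real-analyticity: locally an absolutely convergent power series.\<close>
definition real_analytic_on :: "(pt \<Rightarrow> complex) \<Rightarrow> pt set \<Rightarrow> bool" where
  "real_analytic_on f S \<longleftrightarrow>
     (\<forall>x\<in>S. \<exists>r>0. \<exists>c :: nat \<Rightarrow> nat \<Rightarrow> complex. \<forall>y\<in>ball x r.
        ((\<lambda>(i,j). c i j * of_real ((fst y - fst x) ^ i * (snd y - snd x) ^ j))
           has_sum f y) UNIV)"

definition taylor_hom :: "(pt \<Rightarrow> complex) \<Rightarrow> pt \<Rightarrow> nat \<Rightarrow> pt \<Rightarrow> complex" where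
  "taylor_hom f x0 n y =
     (\<Sum>i\<le>n. pdiff i (n - i) f x0 / of_nat (fact i * fact (n - i))
              * of_real ((fst y - fst x0) ^ i * (snd y - snd x0) ^ (n - i)))"

definition Vani :: "(pt \<Rightarrow> complex) \<Rightarrow> pt \<Rightarrow> enat" where
  "Vani f x0 = (if \<exists>n. taylor_hom f x0 n \<noteq> (\<lambda>_. 0)
                then enat (LEAST n. taylor_hom f x0 n \<noteq> (\<lambda>_. 0)) else \<infinity>)"

definition rot :: "real \<Rightarrow> pt \<Rightarrow> pt" where
  "rot \<theta> v = (cos \<theta> * fst v - sin \<theta> * snd v, sin \<theta> * fst v + cos \<theta> * snd v)"

definition gen_singular_line :: "(pt \<Rightarrow> complex) \<Rightarrow> pt \<Rightarrow> pt \<Rightarrow> real \<Rightarrow> complex \<Rightarrow> bool" where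
  "gen_singular_line u x0 e h \<eta> \<longleftrightarrow>
     (\<forall>x\<in>closed_segment x0 (x0 + h *\<^sub>R e).
        dirderiv (rot (pi/2) e) u x + \<eta> * u x = 0)"

end

theory Submission
  imports Defs
begin


definition Qp :: "(nat \<Rightarrow> nat \<Rightarrow> complex) \<Rightarrow> nat \<Rightarrow> pt \<Rightarrow> complex" where
  "Qp c n v = (\<Sum>i\<le>n. c i (n-i) * (of_real (fst v))^i * (of_real (snd v))^(n-i))"

definition nrm :: "(nat \<Rightarrow> nat \<Rightarrow> complex) \<Rightarrow> nat \<Rightarrow> real" where
  "nrm c n = (\<Sum>i\<le>n. norm (c i (n-i)))"

definition rad :: "(nat \<Rightarrow> nat \<Rightarrow> complex) \<Rightarrow> real \<Rightarrow> bool" where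
  "rad c \<rho> \<longleftrightarrow> (\<forall>\<sigma>. 0 \<le> \<sigma> \<and> \<sigma> < \<rho> \<longrightarrow> summable (\<lambda>n. nrm c n * \<sigma>^n))"

definition dxc :: "(nat \<Rightarrow> nat \<Rightarrow> complex) \<Rightarrow> nat \<Rightarrow> nat \<Rightarrow> complex" where
  "dxc c i j = of_nat (Suc i) * c (Suc i) j"
definition dyc :: "(nat \<Rightarrow> nat \<Rightarrow> complex) \<Rightarrow> nat \<Rightarrow> nat \<Rightarrow> complex" where
  "dyc c i j = of_nat (Suc j) * c i (Suc j)"

lemma nrm_nonneg: "0 \<le> nrm c n"
  unfolding nrm_def by (simp add: sum_nonneg)

lemma Qp_bound:
  assumes "norm v \<le> \<sigma>"
  shows "norm (Qp c n v) \<le> nrm c n * \<sigma>^n"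
proof -
  have f: "\<bar>fst v\<bar> \<le> \<sigma>" "\<bar>snd v\<bar> \<le> \<sigma>"
    using assms norm_fst_le[of "fst v" "snd v"] norm_snd_le[of "snd v" "fst v"]
    by (auto simp: norm_Pair)
  have s0: "0 \<le> \<sigma>" using f by linarith
  have "norm (Qp c n v) \<le> (\<Sum>i\<le>n. norm (c i (n-i) * (of_real (fst v))^i * (of_real (snd v))^(n-i)))"
    unfolding Qp_def by (rule norm_sum)
  also have "\<dots> \<le> (\<Sum>i\<le>n. norm (c i (n-i)) * \<sigma>^n)"
  proof (rule sum_mono)
    fix i assume i: "i \<in> {..n}"
    have "\<bar>fst v\<bar>^i * \<bar>snd v\<bar>^(n-i) \<le> \<sigma>^i * \<sigma>^(n-i)"
      by (intro mult_mono power_mono f) (auto simp: s0)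
    also have "\<dots> = \<sigma>^n" using i by (simp flip: power_add)
    finally show "norm (c i (n-i) * (of_real (fst v))^i * (of_real (snd v))^(n-i)) \<le> norm (c i (n-i)) * \<sigma>^n"
      by (simp add: norm_mult norm_power mult.assoc mult_left_mono)
  qed
  also have "\<dots> = nrm c n * \<sigma>^n" by (simp add: nrm_def sum_distrib_right)
  finally show ?thesis .
qed

lemma Qp_scale: "Qp c n (t *\<^sub>R v) = of_real t ^ n * Qp c n v"
proof -
  have "Qp c n (t *\<^sub>R v) = (\<Sum>i\<le>n. of_real t ^ n * (c i (n-i) * (of_real (fst v))^i * (of_real (snd v))^(n-i)))"
    unfolding Qp_def
  proof (rule sum.cong[OF refl])
    fix i assume "i \<in> {..n}"
    then have "(of_real t::complex) ^ n = of_real t ^ i * of_real t ^ (n-i)" by (simp flip: power_add)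
    then show "c i (n - i) * complex_of_real (fst (t *\<^sub>R v)) ^ i * complex_of_real (snd (t *\<^sub>R v)) ^ (n - i) =
         complex_of_real t ^ n * (c i (n - i) * complex_of_real (fst v) ^ i * complex_of_real (snd v) ^ (n - i))"
      by (simp add: power_mult_distrib)
  qed
  then show ?thesis by (simp add: Qp_def sum_distrib_left)
qed

lemma Qp_lin: "Qp (\<lambda>i j. a * c i j + b * d i j) n v = a * Qp c n v + b * Qp d n v"
  unfolding Qp_def by (simp add: sum.distrib sum_distrib_left algebra_simps)

lemma Qp_lin3: "Qp (\<lambda>i j. a * c i j + b * d i j + e * f i j) n v = a * Qp c n v + b * Qp d n v + e * Qp f n v"
  unfolding Qp_def by (simp add: sum.distrib sum_distrib_left algebra_simps)

lemma Qp_summable: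
  assumes "rad c \<rho>" "norm v < \<rho>"
  shows "summable (\<lambda>n. norm (Qp c n v))"
proof (rule summable_comparison_test)
  show "summable (\<lambda>n. nrm c n * norm v ^ n)" using assms unfolding rad_def by auto
  show "\<exists>N. \<forall>n\<ge>N. norm (norm (Qp c n v)) \<le> nrm c n * norm v ^ n"
    using Qp_bound[of v "norm v" c] by auto
qed

lemma group_sum:
  fixes f :: "nat \<times> nat \<Rightarrow> 'a::{topological_comm_monoid_add,t3_space}"
  assumes "(f has_sum s) UNIV"
  shows "(\<lambda>n. \<Sum>i\<le>n. f (i, n-i)) sums s"
proof -
  have bij: "bij_betw (\<lambda>(n::nat,i::nat). (i, n-i)) (SIGMA n:UNIV. {..n}) UNIV"
    by (rule bij_betw_byWitness[where f'="\<lambda>(i,j). (i+j, i)"]) auto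
  have "((\<lambda>x. f ((\<lambda>(n,i). (i, n-i)) x)) has_sum s) (SIGMA n:UNIV. {..n})"
    using has_sum_reindex_bij_betw[OF bij, of f] assms by simp
  then have "((\<lambda>n. \<Sum>i\<le>n. f (i, n-i)) has_sum s) UNIV"
    by (rule has_sum_SigmaD) (auto intro: has_sum_finite)
  then show ?thesis by (rule has_sum_imp_sums)
qed


lemma sum_dx: "(\<Sum>i\<le>Suc n. c i (Suc n - i) * (of_nat i * X^(i-1) * Y^(Suc n - i))) =
   (\<Sum>i\<le>n. dxc c i (n-i) * X^i * (Y::complex)^(n-i))"
  unfolding dxc_def by (subst sum.atMost_Suc_shift) (simp add: algebra_simps)

lemma sum_dy: "(\<Sum>i\<le>Suc n. c i (Suc n - i) * (X^i * (of_nat (Suc n - i) * Y^(Suc n - i - 1)))) =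
   (\<Sum>i\<le>n. dyc c i (n-i) * X^i * (Y::complex)^(n-i))"
  unfolding dyc_def
  by (subst sum.atMost_Suc) (auto intro!: sum.cong simp: Suc_diff_le algebra_simps)

lemma term_deriv: "((\<lambda>v::pt. c * (of_real (fst v) :: complex)^i * (of_real (snd v))^k) has_derivative
     (\<lambda>h. of_real (fst h) * (c * (of_nat i * (of_real (fst v))^(i-1) * (of_real (snd v))^k))
        + of_real (snd h) * (c * ((of_real (fst v))^i * (of_nat k * (of_real (snd v))^(k - 1)))))) (at v within S)"
  apply (rule derivative_eq_intros refl)+
  apply (simp add: fun_eq_iff algebra_simps)
  done

lemma Qp_deriv:
  "(Qp c (Suc n) has_derivative
     (\<lambda>h. of_real (fst h) * Qp (dxc c) n v + of_real (snd h) * Qp (dyc c) n v)) (at v within S)"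
proof -
  let ?X = "of_real (fst v) :: complex" and ?Y = "of_real (snd v) :: complex"
  have "(Qp c (Suc n) has_derivative
     (\<lambda>h. \<Sum>i\<le>Suc n. of_real (fst h) * (c i (Suc n - i) * (of_nat i * ?X^(i-1) * ?Y^(Suc n - i)))
        + of_real (snd h) * (c i (Suc n - i) * (?X^i * (of_nat (Suc n - i) * ?Y^(Suc n - i - 1)))))) (at v within S)"
    unfolding Qp_def[abs_def]
    by (rule has_derivative_sum) (rule term_deriv)
  moreover have "(\<lambda>h. \<Sum>i\<le>Suc n. of_real (fst h) * (c i (Suc n - i) * (of_nat i * ?X^(i-1) * ?Y^(Suc n - i)))
        + of_real (snd h) * (c i (Suc n - i) * (?X^i * (of_nat (Suc n - i) * ?Y^(Suc n - i - 1))))) =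
     (\<lambda>h. of_real (fst h) * Qp (dxc c) n v + of_real (snd h) * Qp (dyc c) n v)"
    unfolding sum.distrib sum_distrib_left[symmetric] sum_dx sum_dy Qp_def by simp
  ultimately show ?thesis by simp
qed


lemma nrm_dxc: "nrm (dxc c) n \<le> of_nat (Suc n) * nrm c (Suc n)"
proof -
  have "nrm (dxc c) n = (\<Sum>i\<le>n. of_nat (Suc i) * norm (c (Suc i) (Suc n - Suc i)))"
    unfolding nrm_def dxc_def norm_mult norm_of_nat by simp
  also have "\<dots> \<le> (\<Sum>i\<le>n. of_nat (Suc n) * norm (c (Suc i) (Suc n - Suc i)))"
    by (intro sum_mono mult_right_mono) auto
  also have "\<dots> \<le> of_nat (Suc n) * (norm (c 0 (Suc n - 0)) + (\<Sum>i\<le>n. norm (c (Suc i) (Suc n - Suc i))))"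
    by (simp add: sum_distrib_left distrib_left)
  also have "\<dots> = of_nat (Suc n) * nrm c (Suc n)"
    unfolding nrm_def sum.atMost_Suc_shift by simp
  finally show ?thesis .
qed

lemma nrm_dyc: "nrm (dyc c) n \<le> of_nat (Suc n) * nrm c (Suc n)"
proof -
  have "nrm (dyc c) n = (\<Sum>i\<le>n. of_nat (Suc (n-i)) * norm (c i (Suc n - i)))"
    unfolding nrm_def dyc_def norm_mult norm_of_nat by (auto simp: Suc_diff_le simp del: of_nat_Suc intro!: sum.cong)
  also have "\<dots> \<le> (\<Sum>i\<le>n. of_nat (Suc n) * norm (c i (Suc n - i)))"
    by (intro sum_mono mult_right_mono) auto
  also have "\<dots> \<le> of_nat (Suc n) * ((\<Sum>i\<le>n. norm (c i (Suc n - i))) + norm (c (Suc n) (Suc n - Suc n)))"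
    by (simp add: sum_distrib_left distrib_left)
  also have "\<dots> = of_nat (Suc n) * nrm c (Suc n)"
    unfolding nrm_def by simp
  finally show ?thesis .
qed

lemma rad_diffs:
  assumes "rad c \<rho>" "0 \<le> \<sigma>" "\<sigma> < \<rho>"
  shows "summable (\<lambda>n. of_nat (Suc n) * nrm c (Suc n) * \<sigma>^n)"
proof -
  have "summable (\<lambda>n. diffs (nrm c) n * \<sigma>^n)"
  proof (rule termdiff_converges[of _ \<rho>])
    show "norm \<sigma> < \<rho>" using assms by simp
    fix x :: real assume "norm x < \<rho>"
    then have "summable (\<lambda>n. nrm c n * \<bar>x\<bar>^n)" using assms(1) unfolding rad_def by auto
    then have "summable (\<lambda>n. norm (nrm c n * x^n))"
      by (simp add: abs_mult power_abs abs_of_nonneg nrm_nonneg)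
    then show "summable (\<lambda>n. nrm c n * x^n)" by (rule summable_norm_cancel)
  qed
  then show ?thesis by (simp add: diffs_def)
qed

lemma rad_dxc: assumes "rad c \<rho>" shows "rad (dxc c) \<rho>"
  unfolding rad_def
proof (intro allI impI)
  fix \<sigma> :: real assume s: "0 \<le> \<sigma> \<and> \<sigma> < \<rho>"
  show "summable (\<lambda>n. nrm (dxc c) n * \<sigma>^n)"
  proof (rule summable_comparison_test)
    show "summable (\<lambda>n. of_nat (Suc n) * nrm c (Suc n) * \<sigma>^n)" using rad_diffs assms s by auto
    show "\<exists>N. \<forall>n\<ge>N. norm (nrm (dxc c) n * \<sigma> ^ n) \<le> of_nat (Suc n) * nrm c (Suc n) * \<sigma> ^ n"
      using s nrm_dxc[of c] by (auto simp: abs_of_nonneg nrm_nonneg intro!: mult_right_mono)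
  qed
qed

lemma rad_dyc: assumes "rad c \<rho>" shows "rad (dyc c) \<rho>"
  unfolding rad_def
proof (intro allI impI)
  fix \<sigma> :: real assume s: "0 \<le> \<sigma> \<and> \<sigma> < \<rho>"
  show "summable (\<lambda>n. nrm (dyc c) n * \<sigma>^n)"
  proof (rule summable_comparison_test)
    show "summable (\<lambda>n. of_nat (Suc n) * nrm c (Suc n) * \<sigma>^n)" using rad_diffs assms s by auto
    show "\<exists>N. \<forall>n\<ge>N. norm (nrm (dyc c) n * \<sigma> ^ n) \<le> of_nat (Suc n) * nrm c (Suc n) * \<sigma> ^ n"
      using s nrm_dyc[of c] by (auto simp: abs_of_nonneg nrm_nonneg intro!: mult_right_mono)
  qed
qed


definition Sp :: "(nat \<Rightarrow> nat \<Rightarrow> complex) \<Rightarrow> pt \<Rightarrow> complex" where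
  "Sp c v = (\<Sum>n. Qp c n v)"

lemma Sp_sums: "rad c \<rho> \<Longrightarrow> norm v < \<rho> \<Longrightarrow> (\<lambda>n. Qp c n v) sums Sp c v"
  unfolding Sp_def by (rule summable_sums, rule summable_norm_cancel, rule Qp_summable)

lemma Sp_deriv:
  assumes rc: "rad c \<rho>" and v: "norm v < \<rho>"
  shows "(Sp c has_derivative (\<lambda>h. of_real (fst h) * Sp (dxc c) v + of_real (snd h) * Sp (dyc c) v)) (at v)"
proof -
  define \<sigma> where "\<sigma> = (norm v + \<rho>) / 2"
  have r0: "0 < \<rho>" using v norm_ge_zero[of v] by linarith
  have s: "norm v < \<sigma>" "\<sigma> < \<rho>" "0 \<le> \<sigma>" using v r0 by (auto simp: \<sigma>_def)
  have rx: "rad (dxc c) \<rho>" and ry: "rad (dyc c) \<rho>" using rad_dxc rad_dyc rc by auto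
  define M where "M i = (nrm (dxc c) i + nrm (dyc c) i) * \<sigma>^i" for i
  have M0: "0 \<le> M i" for i unfolding M_def by (simp add: nrm_nonneg s)
  have sM: "summable M" unfolding M_def distrib_right
    using rx ry s unfolding rad_def by (intro summable_add) auto
  define f' where "f' i x h = of_real (fst h) * Qp (dxc c) i x + of_real (snd h) * Qp (dyc c) i x"
    for i and x h :: pt
  define g' where "g' x h = of_real (fst h) * Sp (dxc c) x + of_real (snd h) * Sp (dyc c) x" for x h :: pt
  have bnd: "norm (f' i x h) \<le> M i * norm h" if x: "x \<in> ball 0 \<sigma>" for i and x h :: pt
  proof -
    have nx: "norm x \<le> \<sigma>" using x by auto
    have h1: "\<bar>fst h\<bar> \<le> norm h" "\<bar>snd h\<bar> \<le> norm h"
      using norm_fst_le[of "fst h" "snd h"] norm_snd_le[of "snd h" "fst h"] by auto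
    have "norm (f' i x h) \<le> \<bar>fst h\<bar> * norm (Qp (dxc c) i x) + \<bar>snd h\<bar> * norm (Qp (dyc c) i x)"
      unfolding f'_def by (rule order_trans[OF norm_triangle_ineq]) (simp add: norm_mult)
    also have "\<dots> \<le> norm h * (nrm (dxc c) i * \<sigma>^i) + norm h * (nrm (dyc c) i * \<sigma>^i)"
      by (intro add_mono mult_mono h1 Qp_bound nx) auto
    also have "\<dots> = M i * norm h" unfolding M_def by (simp add: algebra_simps)
    finally show ?thesis .
  qed
  have sf': "summable (\<lambda>i. f' i x h)" and g'eq: "g' x h = (\<Sum>i. f' i x h)" if x: "x \<in> ball 0 \<sigma>" for x h :: pt
  proof -
    have nx: "norm x < \<rho>" using x s by auto
    have a: "(\<lambda>i. Qp (dxc c) i x) sums Sp (dxc c) x" "(\<lambda>i. Qp (dyc c) i x) sums Sp (dyc c) x"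
      using Sp_sums[OF rx nx] Sp_sums[OF ry nx] by auto
    have "(\<lambda>i. f' i x h) sums g' x h"
      unfolding f'_def g'_def by (intro sums_add sums_mult a)
    then show "summable (\<lambda>i. f' i x h)" "g' x h = (\<Sum>i. f' i x h)" by (auto simp: sums_iff)
  qed
  have unif: "\<forall>\<^sub>F n in sequentially. \<forall>x\<in>ball (0::pt) \<sigma>. \<forall>h. norm (sum (\<lambda>i. f' i x h) {..<n} - g' x h) \<le> e * norm h"
    if e: "e > 0" for e
  proof -
    obtain N where N: "\<And>n. n \<ge> N \<Longrightarrow> norm (\<Sum>i. M (i + n)) < e"
      using suminf_exist_split[OF e sM] by blast
    show ?thesis unfolding eventually_sequentially
    proof (intro exI allI impI ballI)
      fix n :: nat and x h :: pt assume n: "N \<le> n" and x: "x \<in> ball 0 \<sigma>"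
      have "norm (sum (\<lambda>i. f' i x h) {..<n} - g' x h) = norm (\<Sum>i. f' (i + n) x h)"
        using suminf_split_initial_segment[OF sf'[OF x, of h], where k=n] g'eq[OF x, of h] by (simp add: norm_minus_commute)
      also have "\<dots> \<le> (\<Sum>i. M (i + n) * norm h)"
        by (rule norm_suminf_le[OF bnd[OF x] summable_mult2[OF summable_ignore_initial_segment[OF sM]]])
      also have "\<dots> = (\<Sum>i. M (i + n)) * norm h"
        by (rule suminf_mult2[symmetric]) (rule summable_ignore_initial_segment[OF sM])
      also have "\<dots> \<le> e * norm h"
      proof -
        have "0 \<le> (\<Sum>i. M (i + n))"
          by (intro suminf_nonneg summable_ignore_initial_segment[OF sM] M0)
        then show ?thesis using N[OF n] by (intro mult_right_mono) auto
      qed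
      finally show "norm (sum (\<lambda>i. f' i x h) {..<n} - g' x h) \<le> e * norm h" .
    qed
  qed
  have vS: "v \<in> ball 0 \<sigma>" using s by auto
  have sv: "(\<lambda>n. Qp c (Suc n) v) sums (Sp c v - c 0 0)"
    using Sp_sums[OF rc v] by (subst sums_Suc_iff) (simp add: Qp_def)
  have "\<exists>g. \<forall>x\<in>ball 0 \<sigma>. (\<lambda>n. Qp c (Suc n) x) sums (g x) \<and> (g has_derivative g' x) (at x within ball 0 \<sigma>)"
    by (rule has_derivative_series[of "ball 0 \<sigma>" "\<lambda>n. Qp c (Suc n)" f' g', OF convex_ball _ unif vS sv])
      (unfold f'_def, rule Qp_deriv)
  then obtain g where g: "\<And>x. x \<in> ball 0 \<sigma> \<Longrightarrow> (\<lambda>n. Qp c (Suc n) x) sums (g x) \<and> (g has_derivative g' x) (at x within ball 0 \<sigma>)"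
    by blast
  have eq: "Sp c x = g x + c 0 0" if x: "x \<in> ball 0 \<sigma>" for x
  proof -
    have "(\<lambda>n. Qp c (Suc n) x) sums g x" using g[OF x] by blast
    then have "(\<lambda>n. Qp c n x) sums (g x + Qp c 0 x)" using sums_Suc_iff[of "\<lambda>n. Qp c n x" "g x"] by simp
    moreover have "norm x < \<rho>" using x s by auto
    then have "(\<lambda>n. Qp c n x) sums Sp c x" using Sp_sums[OF rc] by blast
    ultimately show ?thesis by (simp add: sums_iff Qp_def)
  qed
  have "(g has_derivative g' v) (at v)" using g[OF vS] at_within_open[OF vS open_ball] by simp
  then have "((\<lambda>x. g x + c 0 0) has_derivative g' v) (at v)" by (rule has_derivative_add_const)
  then have "(Sp c has_derivative g' v) (at v)"
    by (rule has_derivative_transform_within_open[OF _ open_ball vS]) (simp add: eq)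
  then show ?thesis unfolding g'_def .
qed


lemma dirderiv_Sp:
  assumes rc: "rad c \<rho>" and f: "\<forall>y\<in>ball x0 \<rho>. f y = Sp c (y - x0)" and x: "x \<in> ball x0 \<rho>"
  shows "dirderiv d f x = of_real (fst d) * Sp (dxc c) (x - x0) + of_real (snd d) * Sp (dyc c) (x - x0)"
proof -
  define v where "v = x - x0"
  have nv: "norm v < \<rho>" using x by (simp add: v_def dist_norm norm_minus_commute)
  define D where "D = of_real (fst d) * Sp (dxc c) v + of_real (snd d) * Sp (dyc c) v"
  have g: "((\<lambda>\<tau>::real. v + \<tau> *\<^sub>R d) has_derivative (\<lambda>\<tau>. \<tau> *\<^sub>R d)) (at 0)"
    by (auto intro!: derivative_eq_intros)
  have "((Sp c \<circ> (\<lambda>\<tau>::real. v + \<tau> *\<^sub>R d)) has_derivative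
      ((\<lambda>h. of_real (fst h) * Sp (dxc c) v + of_real (snd h) * Sp (dyc c) v) \<circ> (\<lambda>\<tau>. \<tau> *\<^sub>R d))) (at 0)"
    using diff_chain_at[OF g] Sp_deriv[OF rc nv] by simp
  then have "((\<lambda>\<tau>::real. Sp c (v + \<tau> *\<^sub>R d)) has_vector_derivative D) (at 0)"
    unfolding has_vector_derivative_def D_def o_def
    by (simp add: scaleR_conv_of_real algebra_simps)
  moreover
  obtain e where e: "e > 0" "ball x e \<subseteq> ball x0 \<rho>" using x openE[OF open_ball] by blast
  define T where "T = ball (0::real) (e / (norm d + 1))"
  have dpos: "0 < norm d + 1" by (smt (verit) norm_ge_zero)
  have "((\<lambda>\<tau>::real. f (x + \<tau> *\<^sub>R d)) has_vector_derivative D) (at 0)"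
  proof (rule has_vector_derivative_transform_within_open[OF calculation, of T])
    show "open T" "0 \<in> T" using e dpos by (auto simp: T_def intro!: divide_pos_pos)
    fix \<tau> assume "\<tau> \<in> T"
    then have "\<bar>\<tau>\<bar> < e / (norm d + 1)" by (simp add: T_def)
    then have "\<bar>\<tau>\<bar> * (norm d + 1) < e" using dpos by (simp add: pos_less_divide_eq)
    then have "norm (\<tau> *\<^sub>R d) < e"
      by (smt (verit) mult_left_mono norm_ge_zero norm_scaleR)
    then have "x + \<tau> *\<^sub>R d \<in> ball x e" by (simp add: dist_norm)
    then have "x + \<tau> *\<^sub>R d \<in> ball x0 \<rho>" using e by blast
    then show "Sp c (v + \<tau> *\<^sub>R d) = f (x + \<tau> *\<^sub>R d)" using f by (simp add: v_def algebra_simps)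
  qed
  then show ?thesis unfolding dirderiv_def D_def v_def by (rule vector_derivative_at)
qed

lemma dirderiv_zero:
  assumes "open B" "\<forall>y\<in>B. f y = 0" "x \<in> B"
  shows "dirderiv d f x = 0"
proof -
  obtain e where e: "e > 0" "ball x e \<subseteq> B" using assms openE by blast
  define T where "T = ball (0::real) (e / (norm d + 1))"
  have dpos: "0 < norm d + 1" by (smt (verit) norm_ge_zero)
  have "((\<lambda>\<tau>::real. f (x + \<tau> *\<^sub>R d)) has_vector_derivative 0) (at 0)"
  proof (rule has_vector_derivative_transform_within_open[OF has_vector_derivative_const, of T])
    show "open T" "0 \<in> T" using e dpos by (auto simp: T_def intro!: divide_pos_pos)
    fix \<tau> assume "\<tau> \<in> T"
    then have "\<bar>\<tau>\<bar> < e / (norm d + 1)" by (simp add: T_def)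
    then have "\<bar>\<tau>\<bar> * (norm d + 1) < e" using dpos by (simp add: pos_less_divide_eq)
    then have "norm (\<tau> *\<^sub>R d) < e"
      by (smt (verit) mult_left_mono norm_ge_zero norm_scaleR)
    then have "x + \<tau> *\<^sub>R d \<in> B" using e by (auto simp: dist_norm)
    then show "0 = f (x + \<tau> *\<^sub>R d)" using assms by simp
  qed
  then show ?thesis unfolding dirderiv_def by (rule vector_derivative_at)
qed

lemma funpow_dirderiv_zero:
  assumes "open B" "\<forall>y\<in>B. f y = 0"
  shows "\<forall>y\<in>B. ((dirderiv d) ^^ k) f y = 0"
proof (induction k)
  case 0 then show ?case using assms by simp
next
  case (Suc k) then show ?case using dirderiv_zero[OF assms(1)] by simp
qed

lemma pdiff_zero:
  assumes "open B" "\<forall>y\<in>B. f y = 0" "x \<in> B"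
  shows "pdiff i j f x = 0"
  unfolding pdiff_def
  using funpow_dirderiv_zero[OF assms(1) funpow_dirderiv_zero[OF assms(1,2)]] assms(3) by blast


lemma powser_uniq1:
  fixes a :: "nat \<Rightarrow> complex"
  assumes d: "\<delta> > 0" and s: "\<forall>t. 0 < t \<and> t < \<delta> \<longrightarrow> (\<lambda>n. a n * of_real t ^ n) sums 0"
  shows "a n = 0"
proof (induction n rule: less_induct)
  case (less n)
  have sh: "(\<lambda>i. a (i + n) * of_real t ^ i) sums 0" if t: "0 < t" "t < \<delta>" for t
  proof -
    have z: "(\<Sum>i<n. a i * of_real t ^ i) = 0" using less by simp
    have "(\<lambda>i. a (i + n) * of_real t ^ (i + n)) sums 0"
      using sums_iff_shift[of "\<lambda>i. a i * of_real t ^ i" n 0] s t z by simp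
    then have "(\<lambda>i. a (i + n) * of_real t ^ (i + n) / of_real t ^ n) sums (0 / of_real t ^ n)"
      by (intro sums_divide) simp
    moreover have "a (i + n) * of_real t ^ (i + n) / of_real t ^ n = a (i + n) * of_real t ^ i" for i
      using t by (simp add: power_add)
    ultimately show ?thesis by simp
  qed
  define \<phi> where "\<phi> z = (\<Sum>i. a (i + n) * z ^ i)" for z :: complex
  have "summable (\<lambda>i. a (i + n) * (of_real (\<delta>/2)) ^ i)"
    using sh[of "\<delta>/2"] d by (auto simp: sums_iff)
  then have c: "isCont \<phi> 0" unfolding \<phi>_def[abs_def]
    by (rule isCont_powser) (use d in simp)
  have c': "isCont \<phi> (complex_of_real 0)" using c by simp
  have co: "isCont (\<lambda>t::real. complex_of_real t) 0" by (intro continuous_intros)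
  have "isCont (\<lambda>t::real. \<phi> (of_real t)) 0"
    using isCont_o2[OF co c'] .
  then have l1: "((\<lambda>t::real. \<phi> (of_real t)) \<longlongrightarrow> \<phi> 0) (at_right 0)"
    by (simp add: isCont_def filterlim_at_split)
  have ev: "\<forall>\<^sub>F t in at_right 0. \<phi> (of_real t) = 0"
    using eventually_at_right_real[OF d] by eventually_elim (use sh in \<open>auto simp: \<phi>_def sums_iff\<close>)
  have l2: "((\<lambda>t::real. \<phi> (of_real t)) \<longlongrightarrow> 0) (at_right 0)"
    by (rule tendsto_eventually[OF ev])
  have "\<phi> 0 = 0" using tendsto_unique[OF _ l1 l2] by simp
  moreover have "\<phi> 0 = a n" unfolding \<phi>_def using powser_zero[of "\<lambda>i. a (i + n)"] by simp
  ultimately show ?case by simp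
qed

lemma powser_uniq2:
  assumes d: "\<delta> > 0" and s: "\<forall>v. norm v < \<delta> \<longrightarrow> (\<lambda>n. Qp c n v) sums 0"
  shows "c i j = 0"
proof -
  have Q0: "Qp c n w = 0" for n w
  proof (rule powser_uniq1[where a="\<lambda>n. Qp c n w"])
    have dpos: "0 < norm w + 1" by (smt (verit) norm_ge_zero)
    show "\<delta> / (norm w + 1) > 0" using d dpos by simp
    show "\<forall>t. 0 < t \<and> t < \<delta> / (norm w + 1) \<longrightarrow> (\<lambda>n. Qp c n w * complex_of_real t ^ n) sums 0"
    proof (intro allI impI)
      fix t :: real assume t: "0 < t \<and> t < \<delta> / (norm w + 1)"
      then have "t * (norm w + 1) < \<delta>" using dpos by (simp add: pos_less_divide_eq)
      then have "norm (t *\<^sub>R w) < \<delta>" using t by (simp add: algebra_simps)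
      then have "(\<lambda>n. Qp c n (t *\<^sub>R w)) sums 0" using s by blast
      then show "(\<lambda>n. Qp c n w * complex_of_real t ^ n) sums 0" by (simp add: Qp_scale mult.commute)
    qed
  qed
  let ?n = "i + j"
  have P: "(\<Sum>k\<le>?n. c k (?n - k) * of_real x ^ k) = 0" for x :: real
    using Q0[of ?n "(x, 1)"] by (simp add: Qp_def)
  have "\<forall>x::real. (\<Sum>k\<le>?n. Re (c k (?n - k)) * x ^ k) = 0"
  proof
    fix x :: real
    have "Re (\<Sum>k\<le>?n. c k (?n - k) * of_real x ^ k) = 0" using P[of x] by simp
    then show "(\<Sum>k\<le>?n. Re (c k (?n - k)) * x ^ k) = 0" by (simp flip: of_real_power)
  qed
  then have "\<forall>k\<le>?n. Re (c k (?n - k)) = 0" using polyfun_eq_0[of "\<lambda>k. Re (c k (?n - k))" ?n] by blast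
  then have "Re (c i (?n - i)) = 0" using le_add1[of i j] by blast
  then have re: "Re (c i j) = 0" by simp
  have "\<forall>x::real. (\<Sum>k\<le>?n. Im (c k (?n - k)) * x ^ k) = 0"
  proof
    fix x :: real
    have "Im (\<Sum>k\<le>?n. c k (?n - k) * of_real x ^ k) = 0" using P[of x] by simp
    then show "(\<Sum>k\<le>?n. Im (c k (?n - k)) * x ^ k) = 0" by (simp flip: of_real_power)
  qed
  then have "\<forall>k\<le>?n. Im (c k (?n - k)) = 0" using polyfun_eq_0[of "\<lambda>k. Im (c k (?n - k))" ?n] by blast
  then have "Im (c i (?n - i)) = 0" using le_add1[of i j] by blast
  then have im: "Im (c i j) = 0" by simp
  show ?thesis using re im by (simp add: complex_eq_iff)
qed


definition Fb :: "(nat \<Rightarrow> complex) \<Rightarrow> nat \<Rightarrow> complex \<Rightarrow> complex \<Rightarrow> complex \<Rightarrow> complex \<Rightarrow> complex" where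
  "Fb p n X Y v1 v2 = v1 * (\<Sum>i\<le>n. of_nat (Suc i) * p (Suc i) * X^i * Y^(n-i))
     + v2 * (\<Sum>i\<le>n. of_nat (Suc (n - i)) * p i * X^i * Y^(n-i))"

definition Aw :: "complex \<Rightarrow> nat \<Rightarrow> nat \<Rightarrow> complex" where
  "Aw w N i = of_nat (N choose i) * w ^ (N - i)"

lemma binom_step: "Suc k * (N choose Suc k) = (N - k) * (N choose k)"
  using binomial_absorption[of k N] binomial_absorb_comp[of N k] by simp

lemma Fb_Aw: "Fb (Aw w (Suc n)) n X Y v1 v2 = of_nat (Suc n) * (v1 + w * v2) * (X + w * Y)^n"
proof -
  have 1: "(\<Sum>i\<le>n. of_nat (Suc i) * Aw w (Suc n) (Suc i) * X^i * Y^(n-i)) = of_nat (Suc n) * (X + w * Y)^n"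
  proof -
    have "(\<Sum>i\<le>n. of_nat (Suc i) * Aw w (Suc n) (Suc i) * X^i * Y^(n-i)) =
          (\<Sum>i\<le>n. of_nat (Suc n) * (of_nat (n choose i) * X^i * (w * Y)^(n-i)))"
    proof (rule sum.cong[OF refl])
      fix i assume "i \<in> {..n}"
      have "of_nat (Suc i) * (of_nat (Suc n choose Suc i) :: complex) = of_nat (Suc n) * of_nat (n choose i)"
        using Suc_times_binomial[of i n] by (metis of_nat_mult)
      note h = this
      have "of_nat (Suc i) * Aw w (Suc n) (Suc i) * X^i * Y^(n-i) = (of_nat (Suc i) * of_nat (Suc n choose Suc i)) * (w^(n-i) * X^i * Y^(n-i))"
        unfolding Aw_def by (simp only: diff_Suc_Suc mult_ac)
      also have "\<dots> = (of_nat (Suc n) * of_nat (n choose i)) * (w^(n-i) * X^i * Y^(n-i))" by (simp only: h)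
      also have "\<dots> = of_nat (Suc n) * (of_nat (n choose i) * X^i * (w * Y)^(n-i))" by (simp only: power_mult_distrib mult_ac)
      finally show "of_nat (Suc i) * Aw w (Suc n) (Suc i) * X^i * Y^(n-i) = of_nat (Suc n) * (of_nat (n choose i) * X^i * (w * Y)^(n-i))" .
    qed
    also have "\<dots> = of_nat (Suc n) * (X + w * Y)^n"
      by (simp add: binomial_ring sum_distrib_left)
    finally show ?thesis .
  qed
  have 2: "(\<Sum>i\<le>n. of_nat (Suc (n - i)) * Aw w (Suc n) i * X^i * Y^(n-i)) = of_nat (Suc n) * w * (X + w * Y)^n"
  proof -
    have "(\<Sum>i\<le>n. of_nat (Suc (n - i)) * Aw w (Suc n) i * X^i * Y^(n-i)) =
          (\<Sum>i\<le>n. of_nat (Suc n) * w * (of_nat (n choose i) * X^i * (w * Y)^(n-i)))"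
    proof (rule sum.cong[OF refl])
      fix i assume i: "i \<in> {..n}"
      have hb: "of_nat (Suc (n - i)) * (of_nat (Suc n choose i) :: complex) = of_nat (Suc n) * of_nat (n choose i)"
        using binomial_absorb_comp[of "Suc n" i] i by (metis Suc_diff_le atMost_iff diff_Suc_1 of_nat_mult)
      have hw: "w ^ (Suc n - i) = w * w ^ (n - i)" using i by (simp add: Suc_diff_le)
      note h = hb hw
      have "of_nat (Suc (n - i)) * Aw w (Suc n) i * X^i * Y^(n-i) = (of_nat (Suc (n - i)) * of_nat (Suc n choose i)) * (w ^ (Suc n - i) * X^i * Y^(n-i))"
        unfolding Aw_def by (simp only: mult_ac)
      also have "\<dots> = (of_nat (Suc n) * of_nat (n choose i)) * ((w * w^(n-i)) * X^i * Y^(n-i))" by (simp only: h)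
      also have "\<dots> = of_nat (Suc n) * w * (of_nat (n choose i) * X^i * (w * Y)^(n-i))" by (simp only: power_mult_distrib mult_ac)
      finally show "of_nat (Suc (n - i)) * Aw w (Suc n) i * X^i * Y^(n-i) = of_nat (Suc n) * w * (of_nat (n choose i) * X^i * (w * Y)^(n-i))" .
    qed
    also have "\<dots> = of_nat (Suc n) * w * (X + w * Y)^n"
      by (simp add: binomial_ring sum_distrib_left)
    finally show ?thesis .
  qed
  show ?thesis unfolding Fb_def 1 2 by (simp add: algebra_simps)
qed

lemma Fb_lin: "Fb (\<lambda>i. a * p i + b * q i) n X Y v1 v2 = a * Fb p n X Y v1 v2 + b * Fb q n X Y v1 v2"
  unfolding Fb_def by (simp add: sum.distrib sum_distrib_left algebra_simps del: of_nat_Suc)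

lemma Fb_cong: "(\<And>i. i \<le> Suc n \<Longrightarrow> p i = q i) \<Longrightarrow> Fb p n X Y v1 v2 = Fb q n X Y v1 v2"
  unfolding Fb_def by (auto intro!: sum.cong arg_cong2[where f="(+)"] arg_cong2[where f="(*)"])

definition recur :: "(nat \<Rightarrow> complex) \<Rightarrow> nat \<Rightarrow> bool" where
  "recur p n \<longleftrightarrow> (\<forall>i j. i + j + 1 = n \<longrightarrow>
     of_nat (Suc i) * (of_nat (Suc (Suc i)) * p (Suc (Suc i))) + of_nat (Suc j) * (of_nat (Suc (Suc j)) * p i) = 0)"

lemma recur_Aw:
  assumes "w^2 = -1" shows "recur (Aw w (Suc n)) n"
  unfolding recur_def
proof (intro allI impI)
  fix i j assume ij: "i + j + 1 = n"
  have b: "Suc i * (Suc (Suc i) * (Suc n choose Suc (Suc i))) = Suc j * (Suc (Suc j) * (Suc n choose i))"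
  proof -
    have x1: "Suc n - Suc i = Suc j" "Suc n - i = Suc (Suc j)" using ij by auto
    have "Suc (Suc i) * (Suc n choose Suc (Suc i)) = Suc j * (Suc n choose Suc i)"
      using binom_step[of "Suc i" "Suc n"] unfolding x1 .
    moreover have "Suc i * (Suc n choose Suc i) = Suc (Suc j) * (Suc n choose i)"
      using binom_step[of i "Suc n"] unfolding x1 .
    ultimately show ?thesis by (metis mult.left_commute)
  qed
  have e1: "Suc n - Suc (Suc i) = j" and e2: "Suc n - i = Suc (Suc j)" using ij by auto
  have "of_nat (Suc i) * (of_nat (Suc (Suc i)) * Aw w (Suc n) (Suc (Suc i))) + of_nat (Suc j) * (of_nat (Suc (Suc j)) * Aw w (Suc n) i)
     = (of_nat (Suc i * (Suc (Suc i) * (Suc n choose Suc (Suc i)))) * w^j + of_nat (Suc j * (Suc (Suc j) * (Suc n choose i))) * (w^j * w^2) :: complex)"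
    unfolding Aw_def e1 e2 by (simp add: algebra_simps power2_eq_square)
  also have "\<dots> = 0" unfolding b assms by simp
  finally show "of_nat (Suc i) * (of_nat (Suc (Suc i)) * Aw w (Suc n) (Suc (Suc i))) + of_nat (Suc j) * (of_nat (Suc (Suc j)) * Aw w (Suc n) i) = 0" .
qed

lemma recur_zero:
  assumes r: "recur d n" and d0: "d 0 = 0" and d1: "d 1 = 0"
  shows "i \<le> Suc n \<Longrightarrow> d i = 0"
proof (induction i rule: less_induct)
  case (less i)
  show ?case
  proof (cases i)
    case 0 then show ?thesis using d0 by simp
  next
    case (Suc k) note k = this
    show ?thesis
    proof (cases k)
      case 0 then show ?thesis using d1 k by simp
    next
      case (Suc m)
      have mj: "m + (n - 1 - m) + 1 = n" using less.prems k Suc by simp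
      have "of_nat (Suc m) * (of_nat (Suc (Suc m)) * d (Suc (Suc m))) + of_nat (Suc (n - 1 - m)) * (of_nat (Suc (Suc (n - 1 - m))) * d m) = 0"
        using r[unfolded recur_def, rule_format, OF mj] .
      moreover have "d m = 0" using less.IH[of m] less.prems k Suc by simp
      ultimately show ?thesis using k Suc by (simp del: of_nat_Suc)
    qed
  qed
qed

lemma recur_lin:
  assumes "recur p n" "recur q n" "recur r n" shows "recur (\<lambda>i. p i - a * q i - b * r i) n"
  unfolding recur_def
proof (intro allI impI)
  fix i j assume ij: "i + j + 1 = n"
  define E where "E f = of_nat (Suc i) * (of_nat (Suc (Suc i)) * f (Suc (Suc i))) + of_nat (Suc j) * (of_nat (Suc (Suc j)) * (f i::complex))" for f
  have "E p = 0" "E q = 0" "E r = 0" using assms ij unfolding recur_def E_def by auto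
  moreover have "E (\<lambda>i. p i - a * q i - b * r i) = E p - a * E q - b * E r"
    unfolding E_def by (simp add: algebra_simps)
  ultimately show "E (\<lambda>i. p i - a * q i - b * r i) = 0" by simp
qed


lemma rep:
  assumes r: "recur p n"
  defines "a \<equiv> (p 1 / of_nat (Suc n) - \<i> * p 0) / (2 * \<i>^n)"
    and "b \<equiv> (p 1 / of_nat (Suc n) + \<i> * p 0) / (2 * (-\<i>)^n)"
  shows "i \<le> Suc n \<Longrightarrow> p i = a * Aw \<i> (Suc n) i + b * Aw (-\<i>) (Suc n) i"
proof -
  assume i: "i \<le> Suc n"
  let ?d = "\<lambda>i. p i - a * Aw \<i> (Suc n) i - b * Aw (-\<i>) (Suc n) i"
  have rd: "recur ?d n" by (intro recur_lin r recur_Aw) (simp_all add: power2_eq_square)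
  have N0: "(of_nat (Suc n) :: complex) \<noteq> 0" by (simp del: of_nat_Suc)
  have d0: "?d 0 = 0" unfolding a_def b_def Aw_def using N0
    by (simp add: field_simps power_Suc del: of_nat_Suc)
  have d1: "?d 1 = 0" unfolding a_def b_def Aw_def using N0
    by (simp add: field_simps del: of_nat_Suc)
  have "?d i = 0" by (rule recur_zero[OF rd d0 d1 i])
  then show ?thesis by (simp add: algebra_simps)
qed

lemma Fb_form:
  assumes "\<And>i. i \<le> Suc n \<Longrightarrow> p i = a * Aw \<i> (Suc n) i + b * Aw (-\<i>) (Suc n) i"
  shows "Fb p n X Y (-Y) X = of_nat (Suc n) * \<i> * (a * (X + \<i> * Y)^Suc n - b * (X - \<i> * Y)^Suc n)"
proof -
  have "Fb p n X Y (-Y) X = Fb (\<lambda>i. a * Aw \<i> (Suc n) i + b * Aw (-\<i>) (Suc n) i) n X Y (-Y) X"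
    by (rule Fb_cong) (use assms in simp)
  also have "\<dots> = a * (of_nat (Suc n) * (- Y + \<i> * X) * (X + \<i> * Y) ^ n) + b * (of_nat (Suc n) * (- Y + - \<i> * X) * (X + - \<i> * Y) ^ n)"
    unfolding Fb_lin Fb_Aw ..
  also have "- Y + \<i> * X = \<i> * (X + \<i> * Y)" by (simp add: algebra_simps)
  also have "- Y + - \<i> * X = - \<i> * (X - \<i> * Y)" by (simp add: algebra_simps)
  finally show ?thesis by (simp add: algebra_simps)
qed

lemma cis_irr:
  assumes "cis (real N * \<theta>) = cis (- (real N * \<theta>))" "\<theta> = \<alpha> * pi" "\<alpha> \<notin> \<rat>" "N > 0"
  shows False
proof -
  have "cis (real N * \<theta>) * cis (real N * \<theta>) = cis (- (real N * \<theta>)) * cis (real N * \<theta>)"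
    using assms(1) by simp
  then have c1: "cis (2 * (real N * \<theta>)) = 1" by (simp add: cis_mult mult_ac)
  have "cos (2 * (real N * \<theta>)) = 1" using arg_cong[where f=Re, OF c1] by simp
  then obtain k :: int where k: "2 * (real N * \<theta>) = of_int k * 2 * pi" using cos_one_2pi_int by blast
  then have "real N * \<alpha> = of_int k" using assms(2) by (simp add: field_simps)
  then have "\<alpha> = of_int k / real N" using assms(4) by (simp add: field_simps)
  then have "\<alpha> \<in> \<rat>" by simp
  then show False using assms(3) by simp
qed

lemma harm_main:
  fixes p :: "nat \<Rightarrow> complex" and e1 e2 f1 f2 \<theta> \<alpha> :: real
  assumes r: "recur p n"
    and b1: "Fb p n (of_real e1) (of_real e2) (- of_real e2) (of_real e1) = 0"
    and b2: "Fb p n (of_real f1) (of_real f2) (- of_real f2) (of_real f1) = 0"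
    and zp: "of_real f1 + \<i> * of_real f2 = cis \<theta> * (of_real e1 + \<i> * of_real e2)"
    and zpc: "of_real f1 - \<i> * of_real f2 = cis (-\<theta>) * (of_real e1 - \<i> * of_real e2)"
    and nz: "(of_real e1 + \<i> * of_real e2) \<noteq> 0" "(of_real e1 - \<i> * of_real e2) \<noteq> 0"
    and irr: "\<theta> = \<alpha> * pi" "\<alpha> \<notin> \<rat>"
    and i: "i \<le> Suc n"
  shows "p i = 0"
proof -
  define a where "a = (p 1 / of_nat (Suc n) - \<i> * p 0) / (2 * \<i>^n)"
  define b where "b = (p 1 / of_nat (Suc n) + \<i> * p 0) / (2 * (-\<i>)^n)"
  have R: "\<And>i. i \<le> Suc n \<Longrightarrow> p i = a * Aw \<i> (Suc n) i + b * Aw (-\<i>) (Suc n) i"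
    using rep[OF r] unfolding a_def b_def by blast
  define z where "z = (of_real e1 + \<i> * of_real e2 :: complex)"
  define zc where "zc = (of_real e1 - \<i> * of_real e2 :: complex)"
  have N0: "(of_nat (Suc n) :: complex) \<noteq> 0" by (simp del: of_nat_Suc)
  have E1: "a * z^Suc n = b * zc^Suc n"
    using b1 Fb_form[OF R, of "of_real e1" "of_real e2"] N0 unfolding z_def zc_def by simp
  have E2: "a * (cis \<theta> * z)^Suc n = b * (cis (-\<theta>) * zc)^Suc n"
    using b2 Fb_form[OF R, of "of_real f1" "of_real f2"] N0 unfolding z_def zc_def zp zpc by simp
  have E3: "a * z^Suc n * cis (real (Suc n) * \<theta>) = b * zc^Suc n * cis (- (real (Suc n) * \<theta>))"
  proof -
    have "(cis \<theta> * z)^Suc n = z^Suc n * cis (real (Suc n) * \<theta>)"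
      by (simp only: power_mult_distrib Complex.DeMoivre mult.commute)
    moreover have "(cis (-\<theta>) * zc)^Suc n = zc^Suc n * cis (- (real (Suc n) * \<theta>))"
      by (simp only: power_mult_distrib Complex.DeMoivre mult.commute mult_minus_right mult_minus_left)
    ultimately show ?thesis using E2 by (simp only: mult.assoc)
  qed
  have "b * zc^Suc n * (cis (real (Suc n) * \<theta>) - cis (- (real (Suc n) * \<theta>))) =
        (b * zc^Suc n) * cis (real (Suc n) * \<theta>) - b * zc^Suc n * cis (- (real (Suc n) * \<theta>))"
    by (simp only: right_diff_distrib)
  also have "\<dots> = (a * z^Suc n) * cis (real (Suc n) * \<theta>) - b * zc^Suc n * cis (- (real (Suc n) * \<theta>))"
    by (simp only: E1)
  also have "\<dots> = 0" using E3 by simp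
  finally have "b * zc^Suc n * (cis (real (Suc n) * \<theta>) - cis (- (real (Suc n) * \<theta>))) = 0" .
  moreover have "cis (real (Suc n) * \<theta>) \<noteq> cis (- (real (Suc n) * \<theta>))"
    using cis_irr[OF _ irr, of "Suc n"] by auto
  moreover have "zc \<noteq> 0" using nz(2) unfolding zc_def .
  then have "zc^Suc n \<noteq> 0" by (rule power_not_zero)
  ultimately have b0: "b = 0" by simp
  then have "a = 0" using E1 nz unfolding z_def by simp
  then show ?thesis using R[OF i] b0 by simp
qed


lemma bdry:
  assumes rc: "rad c \<rho>" and r0: "\<rho> > 0" and uS: "\<forall>y\<in>ball x0 \<rho>. u y = Sp c (y - x0)"
    and h: "h > 0" and g: "gen_singular_line u x0 e h C"
  shows "of_real (- snd e) * Qp (dxc c) n e + of_real (fst e) * Qp (dyc c) n e + C * Qp c n e = 0"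
proof -
  define B where "B i j = of_real (- snd e) * dxc c i j + of_real (fst e) * dyc c i j + C * c i j" for i j
  have dpos: "0 < norm e + 1" by (smt (verit) norm_ge_zero)
  define \<delta> where "\<delta> = min h (\<rho> / (norm e + 1))"
  have d0: "\<delta> > 0" using h r0 dpos by (simp add: \<delta>_def)
  have "(\<lambda>n. Qp B n e * of_real t ^ n) sums 0" if t: "0 < t \<and> t < \<delta>" for t
  proof -
    have th: "t \<le> h" using t by (simp add: \<delta>_def)
    have "t < \<rho> / (norm e + 1)" using t by (simp add: \<delta>_def)
    then have "t * (norm e + 1) < \<rho>" using dpos by (simp add: pos_less_divide_eq)
    then have nt: "norm (t *\<^sub>R e) < \<rho>" using t by (simp add: algebra_simps)
    define x where "x = x0 + t *\<^sub>R e"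
    have xb: "x \<in> ball x0 \<rho>" using nt by (simp add: x_def dist_norm)
    have xs: "x \<in> closed_segment x0 (x0 + h *\<^sub>R e)"
      unfolding in_segment x_def
      by (rule exI[where x="t / h"]) (use t th h in \<open>auto simp: algebra_simps\<close>)
    have "dirderiv (rot (pi/2) e) u x + C * u x = 0" using g xs unfolding gen_singular_line_def by blast
    moreover have "dirderiv (rot (pi/2) e) u x = of_real (- snd e) * Sp (dxc c) (t *\<^sub>R e) + of_real (fst e) * Sp (dyc c) (t *\<^sub>R e)"
      using dirderiv_Sp[OF rc uS xb] by (simp add: rot_def x_def)
    moreover have "u x = Sp c (t *\<^sub>R e)" using uS xb by (simp add: x_def)
    ultimately have "of_real (- snd e) * Sp (dxc c) (t *\<^sub>R e) + of_real (fst e) * Sp (dyc c) (t *\<^sub>R e) + C * Sp c (t *\<^sub>R e) = 0"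
      by simp
    moreover have "(\<lambda>n. Qp B n (t *\<^sub>R e)) sums (of_real (- snd e) * Sp (dxc c) (t *\<^sub>R e) + of_real (fst e) * Sp (dyc c) (t *\<^sub>R e) + C * Sp c (t *\<^sub>R e))"
      unfolding B_def Qp_lin3
      by (intro sums_add sums_mult Sp_sums[OF rc nt] Sp_sums[OF rad_dxc[OF rc] nt] Sp_sums[OF rad_dyc[OF rc] nt])
    ultimately have "(\<lambda>n. Qp B n (t *\<^sub>R e)) sums 0" by simp
    then show ?thesis by (simp add: Qp_scale mult.commute)
  qed
  then have "Qp B n e = 0" using powser_uniq1[OF d0, of "\<lambda>n. Qp B n e"] by blast
  then show ?thesis unfolding B_def Qp_lin3 .
qed



lemma Qp_zero_pt: "(\<lambda>n. Qp c n 0) sums c 0 0"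
proof -
  have "Qp c n 0 = Qp c n (1,1) * 0^n" for n
    using Qp_scale[of c n 0 "(1,1)"] by (simp add: zero_prod_def mult.commute)
  moreover have "(\<lambda>n. Qp c n (1,1) * 0^n) sums Qp c 0 (1,1)" by (rule powser_sums_zero)
  ultimately show ?thesis by (simp add: Qp_def)
qed

lemma vani_nonzero:
  assumes "u x0 \<noteq> 0" shows "Vani u x0 = 0"
proof -
  have t0: "taylor_hom u x0 0 = (\<lambda>_. u x0)"
    by (simp add: taylor_hom_def pdiff_def fun_eq_iff)
  then have ex: "\<exists>n. taylor_hom u x0 n \<noteq> (\<lambda>_. 0)" using assms by (metis)
  have "(LEAST n. taylor_hom u x0 n \<noteq> (\<lambda>_. 0)) = 0"
    using t0 assms by (intro Least_eq_0) (simp add: fun_eq_iff)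
  then show ?thesis using ex unfolding Vani_def by (simp add: zero_enat_def)
qed

lemma vani_inf:
  assumes "open B" "x0 \<in> B" "\<forall>y\<in>B. u y = 0" shows "Vani u x0 = \<infinity>"
proof -
  have "taylor_hom u x0 n = (\<lambda>_. 0)" for n
    unfolding taylor_hom_def using pdiff_zero[OF assms(1,3,2)] by (simp add: fun_eq_iff)
  then show ?thesis unfolding Vani_def by simp
qed



lemma Fb_Qp: "Fb (\<lambda>i. c i (Suc n - i)) n (of_real (fst e)) (of_real (snd e)) v1 v2 = v1 * Qp (dxc c) n e + v2 * Qp (dyc c) n e"
proof -
  have 1: "(\<Sum>i\<le>n. of_nat (Suc i) * c (Suc i) (Suc n - Suc i) * of_real (fst e)^i * of_real (snd e)^(n-i)) = Qp (dxc c) n e"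
    unfolding Qp_def dxc_def by (simp add: mult.assoc)
  have 2: "(\<Sum>i\<le>n. of_nat (Suc (n - i)) * c i (Suc n - i) * of_real (fst e)^i * of_real (snd e)^(n-i)) = Qp (dyc c) n e"
    unfolding Qp_def dyc_def by (intro sum.cong refl) (simp add: Suc_diff_le mult.assoc del: of_nat_Suc)
  show ?thesis unfolding Fb_def 1 2 ..
qed

lemma pdiff20: "pdiff 2 0 f x = dirderiv (1,0) (dirderiv (1,0) f) x"
  by (simp add: pdiff_def numeral_2_eq_2)
lemma pdiff02: "pdiff 0 2 f x = dirderiv (0,1) (dirderiv (0,1) f) x"
  by (simp add: pdiff_def numeral_2_eq_2)

theorem theorem4p1:
  fixes \<Omega> :: "pt set" and lam :: real and u :: "pt \<Rightarrow> complex"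
    and x0 em ep :: pt and h \<alpha> :: real and C1 C2 :: complex
  assumes "open \<Omega>" and "lam > 0"
    and "set_borel_measurable lborel \<Omega> u"
    and "set_integrable lborel \<Omega> (\<lambda>x. (cmod (u x))\<^sup>2)"
    and "real_analytic_on u \<Omega>"
    and "\<forall>x\<in>\<Omega>. - laplacian u x = of_real lam * u x"
    and "x0 \<in> \<Omega>" and "h > 0"
    and "norm em = 1" and "0 < \<alpha>" and "\<alpha> < 2" and "\<alpha> \<notin> \<rat>"
    and "ep = rot (\<alpha> * pi) em"
    and "closed_segment x0 (x0 + h *\<^sub>R em) \<subseteq> \<Omega>"
    and "closed_segment x0 (x0 + h *\<^sub>R ep) \<subseteq> \<Omega>"
    and "C1 \<noteq> 0" and "C2 \<noteq> 0"
    and "gen_singular_line u x0 em h C1"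
    and "gen_singular_line u x0 ep h C2"
  shows "(u x0 \<noteq> 0 \<longrightarrow> Vani u x0 = 0) \<and> (u x0 = 0 \<longrightarrow> Vani u x0 = \<infinity>)"
proof (intro conjI impI)
  assume "u x0 \<noteq> 0" then show "Vani u x0 = 0" by (rule vani_nonzero)
next
  assume u0: "u x0 = 0"
  obtain r c where r: "r > 0" and hs: "\<forall>y\<in>ball x0 r. ((\<lambda>(i,j). c i j * of_real ((fst y - fst x0) ^ i * (snd y - snd x0) ^ j)) has_sum u y) UNIV"
    using assms(5,7) unfolding real_analytic_on_def by blast
  obtain \<epsilon> where eps: "\<epsilon> > 0" "ball x0 \<epsilon> \<subseteq> \<Omega>" using assms(1,7) openE by blast
  define \<rho> where "\<rho> = min (r/2) \<epsilon>"
  have r0: "\<rho> > 0" using r eps by (simp add: \<rho>_def)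
  have HS: "(\<lambda>n. Qp c n v) sums u (x0 + v)" if v: "norm v < r" for v
  proof -
    have "x0 + v \<in> ball x0 r" using v by (simp add: dist_norm)
    from group_sum[OF hs[rule_format, OF this]]
    have "(\<lambda>n. \<Sum>i\<le>n. c i (n - i) * of_real (fst v ^ i * snd v ^ (n - i))) sums u (x0 + v)" by simp
    then show ?thesis by (simp add: Qp_def mult.assoc)
  qed
  have rc: "rad c \<rho>" unfolding rad_def
  proof (intro allI impI)
    fix \<sigma> :: real assume s: "0 \<le> \<sigma> \<and> \<sigma> < \<rho>"
    have "sqrt (\<sigma>^2 + \<sigma>^2) < sqrt (r^2)"
    proof (rule real_sqrt_less_mono)
      have "\<sigma> < r/2" using s by (simp add: \<rho>_def)
      then have "\<sigma>^2 < (r/2)^2" using s by (intro power_strict_mono) auto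
      then have "\<sigma>^2 * 4 < r^2" by (simp add: power_divide)
      moreover have "0 \<le> \<sigma>^2" by simp
      ultimately show "\<sigma>^2 + \<sigma>^2 < r^2" by linarith
    qed
    then have "norm (\<sigma>, \<sigma>) < r" using r by (simp add: norm_Pair)
    then have "x0 + (\<sigma>, \<sigma>) \<in> ball x0 r" by (simp add: dist_norm norm_Pair)
    from hs[rule_format, OF this]
    have "((\<lambda>(i,j). c i j * of_real (\<sigma> ^ i * \<sigma> ^ j)) has_sum u (x0 + (\<sigma>, \<sigma>))) UNIV" by simp
    then have "(\<lambda>(i,j). c i j * of_real (\<sigma> ^ i * \<sigma> ^ j)) summable_on UNIV" by (rule has_sum_imp_summable)
    then have "(\<lambda>x. norm ((\<lambda>(i,j). c i j * of_real (\<sigma> ^ i * \<sigma> ^ j)) x)) summable_on UNIV"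
      using summable_on_iff_abs_summable_on_complex by blast
    then obtain S where S: "((\<lambda>x. norm ((\<lambda>(i,j). c i j * of_real (\<sigma> ^ i * \<sigma> ^ j)) x)) has_sum S) UNIV"
      unfolding summable_on_def by blast
    from group_sum[OF S]
    have "(\<lambda>n. \<Sum>i\<le>n. norm (c i (n - i) * of_real (\<sigma> ^ i * \<sigma> ^ (n - i)))) sums S" by simp
    moreover have "(\<Sum>i\<le>n. norm (c i (n - i) * of_real (\<sigma> ^ i * \<sigma> ^ (n - i)))) = nrm c n * \<sigma>^n" for n
    proof -
      have "(\<Sum>i\<le>n. norm (c i (n - i) * of_real (\<sigma> ^ i * \<sigma> ^ (n - i)))) = (\<Sum>i\<le>n. norm (c i (n - i)) * \<sigma>^n)"
        using s by (intro sum.cong refl) (simp add: norm_mult norm_power abs_mult power_abs flip: power_add)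
      then show ?thesis by (simp add: nrm_def sum_distrib_right)
    qed
    ultimately show "summable (\<lambda>n. nrm c n * \<sigma>^n)" by (simp add: sums_iff)
  qed
  have uS: "\<forall>y\<in>ball x0 \<rho>. u y = Sp c (y - x0)"
  proof
    fix y assume y: "y \<in> ball x0 \<rho>"
    then have n1: "norm (y - x0) < \<rho>" by (simp add: dist_norm norm_minus_commute)
    have "\<rho> \<le> r/2" by (simp add: \<rho>_def)
    then have "norm (y - x0) < r" using n1 norm_ge_zero[of "y - x0"] by linarith
    from HS[OF this] have "(\<lambda>n. Qp c n (y - x0)) sums u y" by simp
    then show "u y = Sp c (y - x0)" using Sp_sums[OF rc n1] sums_unique2 by blast
  qed
  define L where "L i j = 1 * dxc (dxc c) i j + 1 * dyc (dyc c) i j + of_real lam * c i j" for i j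
  have Lap: "\<forall>v. norm v < \<rho> \<longrightarrow> (\<lambda>n. Qp L n v) sums 0"
  proof (intro allI impI)
    fix v :: pt assume v: "norm v < \<rho>"
    define x where "x = x0 + v"
    have xb: "x \<in> ball x0 \<rho>" using v by (simp add: x_def dist_norm)
    have xO: "x \<in> \<Omega>" using xb eps by (auto simp: \<rho>_def)
    have dx1: "\<forall>y\<in>ball x0 \<rho>. dirderiv (1,0) u y = Sp (dxc c) (y - x0)"
      using dirderiv_Sp[OF rc uS] by simp
    have dy1: "\<forall>y\<in>ball x0 \<rho>. dirderiv (0,1) u y = Sp (dyc c) (y - x0)"
      using dirderiv_Sp[OF rc uS] by simp
    have p20: "pdiff 2 0 u x = Sp (dxc (dxc c)) v"
      unfolding pdiff20 using dirderiv_Sp[OF rad_dxc[OF rc] dx1 xb] by (simp add: x_def)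
    have p02: "pdiff 0 2 u x = Sp (dyc (dyc c)) v"
      unfolding pdiff02 using dirderiv_Sp[OF rad_dyc[OF rc] dy1 xb] by (simp add: x_def)
    have "- laplacian u x = of_real lam * u x" using assms(6) xO by blast
    then have e0: "- (Sp (dxc (dxc c)) v + Sp (dyc (dyc c)) v) = of_real lam * Sp c v"
      using uS xb unfolding laplacian_def p20 p02 by (simp add: x_def)
    have "1 * Sp (dxc (dxc c)) v + 1 * Sp (dyc (dyc c)) v + of_real lam * Sp c v =
       (Sp (dxc (dxc c)) v + Sp (dyc (dyc c)) v) + - (Sp (dxc (dxc c)) v + Sp (dyc (dyc c)) v)"
      by (simp only: e0 mult_1)
    then have eq: "1 * Sp (dxc (dxc c)) v + 1 * Sp (dyc (dyc c)) v + of_real lam * Sp c v = 0" by simp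
    have "(\<lambda>n. Qp L n v) sums (1 * Sp (dxc (dxc c)) v + 1 * Sp (dyc (dyc c)) v + of_real lam * Sp c v)"
      unfolding L_def Qp_lin3
      by (intro sums_add sums_mult Sp_sums[OF rc v] Sp_sums[OF rad_dxc[OF rad_dxc[OF rc]] v] Sp_sums[OF rad_dyc[OF rad_dyc[OF rc]] v])
    then show "(\<lambda>n. Qp L n v) sums 0" using eq by simp
  qed
  have Lz: "L i j = 0" for i j by (rule powser_uniq2[OF r0 Lap])
  have bm: "of_real (- snd em) * Qp (dxc c) n em + of_real (fst em) * Qp (dyc c) n em + C1 * Qp c n em = 0" for n
    by (rule bdry[OF rc r0 uS assms(8,18)])
  have bp: "of_real (- snd ep) * Qp (dxc c) n ep + of_real (fst ep) * Qp (dyc c) n ep + C2 * Qp c n ep = 0" for n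
    by (rule bdry[OF rc r0 uS assms(8,19)])
  define \<theta> where "\<theta> = \<alpha> * pi"
  have zp: "of_real (fst ep) + \<i> * of_real (snd ep) = cis \<theta> * (of_real (fst em) + \<i> * of_real (snd em))"
    using assms(13) unfolding \<theta>_def by (simp add: rot_def complex_eq_iff cis.ctr)
  have zpc: "of_real (fst ep) - \<i> * of_real (snd ep) = cis (-\<theta>) * (of_real (fst em) - \<i> * of_real (snd em))"
    using assms(13) unfolding \<theta>_def by (simp add: rot_def complex_eq_iff cis.ctr)
  have em0: "em \<noteq> 0" using assms(9) by auto
  have nz1: "of_real (fst em) + \<i> * of_real (snd em) \<noteq> 0"
  proof
    assume "of_real (fst em) + \<i> * of_real (snd em) = 0"
    then have "fst em = 0" "snd em = 0" by (simp_all add: complex_eq_iff)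
    then show False using em0 by (simp add: prod_eq_iff)
  qed
  have nz2: "of_real (fst em) - \<i> * of_real (snd em) \<noteq> 0"
  proof
    assume "of_real (fst em) - \<i> * of_real (snd em) = 0"
    then have "fst em = 0" "snd em = 0" by (simp_all add: complex_eq_iff)
    then show False using em0 by (simp add: prod_eq_iff)
  qed
  have main: "\<forall>i\<le>N. c i (N - i) = 0" for N
  proof (induction N rule: less_induct)
    case (less N)
    show ?case
    proof (cases N)
      case 0
      have "(\<lambda>n. Qp c n 0) sums u x0" using HS[of 0] r by simp
      then have "c 0 0 = u x0" by (rule sums_unique2[OF Qp_zero_pt])
      then have "c 0 0 = 0" using u0 by simp
      then show ?thesis using 0 by simp
    next
      case (Suc n)
      have cz: "c i j = 0" if "i + j \<le> n" for i j
      proof -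
        have "\<forall>ia\<le>i + j. c ia (i + j - ia) = 0" using less.IH[of "i + j"] that Suc by simp
        then have "c i (i + j - i) = 0" using le_add1[of i j] by blast
        then show ?thesis by simp
      qed
      define p where "p i = c i (Suc n - i)" for i
      have Q0: "Qp c n e = 0" for e unfolding Qp_def by (simp add: cz)
      have rp: "recur p n" unfolding recur_def
      proof (intro allI impI)
        fix i j assume ij: "i + j + 1 = n"
        have "L i j = 0" by (rule Lz)
        moreover have "c i j = 0" using ij by (intro cz) simp
        moreover have "Suc n - Suc (Suc i) = j" "Suc n - i = Suc (Suc j)" using ij by auto
        ultimately show "of_nat (Suc i) * (of_nat (Suc (Suc i)) * p (Suc (Suc i))) + of_nat (Suc j) * (of_nat (Suc (Suc j)) * p i) = 0"
          unfolding L_def dxc_def dyc_def p_def by (simp del: of_nat_Suc)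
      qed
      have b1: "Fb p n (of_real (fst em)) (of_real (snd em)) (- of_real (snd em)) (of_real (fst em)) = 0"
        using bm[of n] unfolding p_def Fb_Qp Q0 by simp
      have b2: "Fb p n (of_real (fst ep)) (of_real (snd ep)) (- of_real (snd ep)) (of_real (fst ep)) = 0"
        using bp[of n] unfolding p_def Fb_Qp Q0 by simp
      have "p i = 0" if "i \<le> Suc n" for i
        by (rule harm_main[OF rp b1 b2 zp zpc nz1 nz2 \<theta>_def assms(12) that])
      then show ?thesis using Suc by (simp add: p_def)
    qed
  qed
  have call: "c i j = 0" for i j
  proof -
    have "c i (i + j - i) = 0" using main[of "i + j"] le_add1[of i j] by blast
    then show ?thesis by simp
  qed
  have "\<forall>y\<in>ball x0 \<rho>. u y = 0"
  proof
    fix y assume "y \<in> ball x0 \<rho>"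
    then have "u y = Sp c (y - x0)" using uS by blast
    also have "\<dots> = 0" unfolding Sp_def Qp_def by (simp add: call)
    finally show "u y = 0" .
  qed
  moreover have "x0 \<in> ball x0 \<rho>" using r0 by simp
  ultimately show "Vani u x0 = \<infinity>" using vani_inf[OF open_ball] by blast
qed


end
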